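(* Let $X$ be a compact $\mathbb{R}$-tree. Then no branch point of $X$ belongs to the support of the diversity-maximizing measure of $X$.
   Context: An $\mathbb{R}$-tree is a uniquely geodesic metric space (any two points $x,y$ are joined by a unique segment $\llbracket x,y\rrbracket$, a subset isometric to a compact interval with endpoints $x,y$) such that $\llbracket x,z\rrbracket\subseteq\llbracket x,y\rrbracket\cup\llbracket y,z\rrbracket$ for all $x,y,z$. The degree of a point $x$ is the number of connected components of $X\setminus\{x\}$; branch points are points of degree at least $3$. For a compact metric space $X$, the diversity-maximizing measure is a Borel probability measure $\mu$ minimizing $\int_X\int_X e^{-d(x,y)}\mu(dx)\mu(dy)$ over all Borel probability measures; compact $\mathbb{R}$-trees are of negative type, so such a minimizer exists and is unique. The support of $\mu$ is its closed support. *)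

theory Defs
  imports "HOL-Analysis.Analysis" "HOL-Probability.Probability"
begin

definition is_segment :: "'a::metric_space set \<Rightarrow> 'a \<Rightarrow> 'a \<Rightarrow> 'a set \<Rightarrow> bool" where
  "is_segment X x y S \<longleftrightarrow> S \<subseteq> X \<and>
     (\<exists>\<gamma>::real \<Rightarrow> 'a. \<gamma> ` {0..dist x y} = S \<and> \<gamma> 0 = x \<and> \<gamma> (dist x y) = y \<and>
        (\<forall>s\<in>{0..dist x y}. \<forall>t\<in>{0..dist x y}. dist (\<gamma> s) (\<gamma> t) = \<bar>s - t\<bar>))"

definition segment_in :: "'a::metric_space set \<Rightarrow> 'a \<Rightarrow> 'a \<Rightarrow> 'a set" where
  "segment_in X x y = (THE S. is_segment X x y S)"

definition uniquely_geodesic :: "'a::metric_space set \<Rightarrow> bool" where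
  "uniquely_geodesic X \<longleftrightarrow> (\<forall>x\<in>X. \<forall>y\<in>X. \<exists>!S. is_segment X x y S)"

definition R_tree :: "'a::metric_space set \<Rightarrow> bool" where
  "R_tree X \<longleftrightarrow> uniquely_geodesic X \<and>
     (\<forall>x\<in>X. \<forall>y\<in>X. \<forall>z\<in>X. segment_in X x z \<subseteq> segment_in X x y \<union> segment_in X y z)"

definition branch_point :: "'a::metric_space set \<Rightarrow> 'a \<Rightarrow> bool" where
  "branch_point X x \<longleftrightarrow> x \<in> X \<and>
     (infinite (components (X - {x})) \<or> card (components (X - {x})) \<ge> 3)"

definition borel_prob_on :: "'a::metric_space set \<Rightarrow> 'a measure \<Rightarrow> bool" where
  "borel_prob_on X M \<longleftrightarrow> sets M = sets (restrict_space borel X) \<and> prob_space M"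

definition diversity_energy :: "'a::metric_space measure \<Rightarrow> real" where
  "diversity_energy M = (\<integral>x. (\<integral>y. exp (- dist x y) \<partial>M) \<partial>M)"

definition diversity_maximizing :: "'a::metric_space set \<Rightarrow> 'a measure \<Rightarrow> bool" where
  "diversity_maximizing X M \<longleftrightarrow> borel_prob_on X M \<and>
     (\<forall>N. borel_prob_on X N \<longrightarrow> diversity_energy M \<le> diversity_energy N)"

definition measure_support :: "'a::metric_space set \<Rightarrow> 'a measure \<Rightarrow> 'a set" where
  "measure_support X M = {x \<in> X. \<forall>U. open U \<and> x \<in> U \<longrightarrow> measure M (U \<inter> X) > 0}"

end

theory Submission
  imports Defs
begin


lemma bp_meas:
  assumes "borel_prob_on X M" and "g \<in> borel_measurable (restrict_space borel X)"
  shows "g \<in> borel_measurable M"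
  using assms measurable_cong_sets[of M "restrict_space borel X" borel borel] unfolding borel_prob_on_def
  by blast

lemma bp_space:
  assumes "borel_prob_on X M" shows "space M = X"
  using sets_eq_imp_space_eq[of M "restrict_space borel X"] assms
  unfolding borel_prob_on_def by (simp add: space_restrict_space)

lemma bp_integrable:
  assumes "borel_prob_on X M" and "g \<in> borel_measurable (restrict_space borel X)"
    and "\<forall>z\<in>X. \<bar>g z\<bar> \<le> B"
  shows "integrable M (g::_\<Rightarrow>real)"
proof -
  interpret prob_space M using assms(1) unfolding borel_prob_on_def by auto
  show ?thesis
    apply (rule integrable_const_bound[where B=B])
    using assms bp_space[OF assms(1)] bp_meas[OF assms(1,2)] by auto
qed

lemma mixture:
  assumes bp: "borel_prob_on X M" and xX: "x \<in> X" and e0: "0 \<le> e" and e1: "e \<le> 1"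
  shows "\<exists>N. borel_prob_on X N \<and> (\<forall>g B. g \<in> borel_measurable (restrict_space borel X) \<longrightarrow>
      (\<forall>z\<in>X. \<bar>g z\<bar> \<le> B) \<longrightarrow> integral\<^sup>L N g = (1 - e) * integral\<^sup>L M g + e * (g x::real))"
proof -
  interpret M: prob_space M using bp unfolding borel_prob_on_def by auto
  define Q where "Q = measure_pmf (bernoulli_pmf e)"
  interpret Q: prob_space Q unfolding Q_def by (rule prob_space_measure_pmf)
  interpret P: pair_prob_space M Q ..
  define P where "P = M \<Otimes>\<^sub>M Q"
  define f where "f = (\<lambda>\<omega>::'a \<times> bool. if snd \<omega> then x else fst \<omega>)"
  have sM: "sets M = sets (restrict_space borel X)" using bp unfolding borel_prob_on_def by auto
  have fm: "f \<in> measurable P (restrict_space borel X)"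
    unfolding f_def P_def
  proof (rule measurable_If)
    show "(\<lambda>\<omega>. x) \<in> measurable (M \<Otimes>\<^sub>M Q) (restrict_space borel X)"
      using xX by (simp add: space_restrict_space)
    have "fst \<in> measurable (M \<Otimes>\<^sub>M Q) M" by simp
    then show "fst \<in> measurable (M \<Otimes>\<^sub>M Q) (restrict_space borel X)"
      using sM by (metis measurable_cong_sets)
    have "snd \<in> measurable (M \<Otimes>\<^sub>M Q) (count_space UNIV)" unfolding Q_def by simp
    then have "snd -` {True} \<inter> space (M \<Otimes>\<^sub>M Q) \<in> sets (M \<Otimes>\<^sub>M Q)"
      by (rule measurable_sets) simp
    moreover have "{\<omega> \<in> space (M \<Otimes>\<^sub>M Q). snd \<omega>} = snd -` {True} \<inter> space (M \<Otimes>\<^sub>M Q)" by auto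
    ultimately show "{\<omega> \<in> space (M \<Otimes>\<^sub>M Q). snd \<omega>} \<in> sets (M \<Otimes>\<^sub>M Q)" by simp
  qed
  define N where "N = distr P (restrict_space borel X) f"
  have "prob_space P" unfolding P_def by (rule P.P.prob_space_axioms)
  then have pN: "prob_space N" unfolding N_def by (rule prob_space.prob_space_distr[OF _ fm])
  have bpN: "borel_prob_on X N" unfolding borel_prob_on_def N_def using pN N_def by simp
  show ?thesis
  proof (intro exI conjI allI impI, rule bpN)
    fix g :: "'a \<Rightarrow> real" and B
    assume gm: "g \<in> borel_measurable (restrict_space borel X)" and gB: "\<forall>z\<in>X. \<bar>g z\<bar> \<le> B"
    have "integral\<^sup>L N g = (\<integral>\<omega>. g (f \<omega>) \<partial>P)" unfolding N_def
      by (rule integral_distr[OF fm gm])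
    also have "\<dots> = integral\<^sup>L P (case_prod (\<lambda>y c. g (if c then x else y)))"
      unfolding f_def by (simp add: case_prod_beta')
    also have "\<dots> = (\<integral>c. (\<integral>y. g (if c then x else y) \<partial>M) \<partial>Q)"
      unfolding P_def
    proof (rule P.integral_snd[symmetric])
      have gfm: "(\<lambda>\<omega>. g (f \<omega>)) \<in> borel_measurable P" using measurable_comp[OF fm gm] by (simp add: comp_def)
      show "integrable (M \<Otimes>\<^sub>M Q) (\<lambda>(y, c). g (if c then x else y))"
      proof (rule P.P.integrable_const_bound[where B=B])
        show "AE \<omega> in M \<Otimes>\<^sub>M Q. norm ((\<lambda>(y, c). g (if c then x else y)) \<omega>) \<le> B"
          using gB xX bp_space[OF bp] by (auto simp: space_pair_measure)
        show "(\<lambda>(y, c). g (if c then x else y)) \<in> borel_measurable (M \<Otimes>\<^sub>M Q)"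
          using gfm unfolding f_def P_def by (simp add: case_prod_beta' if_distrib)
      qed
    qed
    also have "\<dots> = e * (\<integral>y. g x \<partial>M) + (1 - e) * (\<integral>y. g y \<partial>M)"
      unfolding Q_def
      by (subst integral_measure_pmf[where A=UNIV]) (auto simp: UNIV_bool e0 e1)
    also have "\<dots> = (1 - e) * integral\<^sup>L M g + e * g x" by (simp add: M.prob_space)
    finally show "integral\<^sup>L N g = (1 - e) * integral\<^sup>L M g + e * g x" .
  qed
qed

lemma exp_lip:
  fixes a b :: real assumes "0 \<le> a" "0 \<le> b"
  shows "\<bar>exp (- a) - exp (- b)\<bar> \<le> \<bar>a - b\<bar>"
proof -
  have *: "exp (- u) - exp (- v) \<le> v - u" if "0 \<le> u" "u \<le> v" for u v :: real
  proof -
    have "exp (- u) - exp (- v) = exp (- u) * (1 - exp (-(v - u)))"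
      by (simp add: algebra_simps flip: exp_add)
    also have "\<dots> \<le> 1 * (1 - exp (-(v - u)))"
      using that by (intro mult_right_mono) auto
    also have "\<dots> \<le> v - u" using exp_ge_add_one_self[of "u-v"] by (simp; linarith)
    finally show ?thesis .
  qed
  show ?thesis
  proof (cases "a \<le> b")
    case True then show ?thesis using *[of a b] assms by auto
  next
    case False then show ?thesis using *[of b a] assms by auto
  qed
qed

definition Kp :: "'a::metric_space measure \<Rightarrow> 'a \<Rightarrow> real" where
  "Kp M z = (\<integral>y. exp (- dist z y) \<partial>M)"

lemma exp_meas: "(\<lambda>y. exp (- dist z y)) \<in> borel_measurable (restrict_space borel X)"
  by (intro borel_measurable_continuous_on_restrict continuous_intros)

lemma exp_bound: "\<forall>y\<in>X. \<bar>exp (- dist z y)\<bar> \<le> 1" by auto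

lemma Kp_int: assumes "borel_prob_on X M" shows "integrable M (\<lambda>y. exp (- dist z y))"
  by (rule bp_integrable[OF assms exp_meas exp_bound])

lemma Kp_bounds: assumes bp: "borel_prob_on X M" shows "0 \<le> Kp M z" "Kp M z \<le> 1"
proof -
  interpret prob_space M using bp unfolding borel_prob_on_def by auto
  show "0 \<le> Kp M z" unfolding Kp_def by (rule Bochner_Integration.integral_nonneg) auto
  have "Kp M z \<le> (\<integral>y. 1 \<partial>M)" unfolding Kp_def
    by (rule integral_mono[OF Kp_int[OF bp]]) auto
  then show "Kp M z \<le> 1" by (simp add: prob_space)
qed

lemma Kp_lower: assumes bp: "borel_prob_on X M" and R: "\<forall>y\<in>X. dist z y \<le> R"
  shows "exp (- R) \<le> Kp M z"
proof -
  interpret prob_space M using bp unfolding borel_prob_on_def by auto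
  have "(\<integral>y. exp (- R) \<partial>M) \<le> Kp M z" unfolding Kp_def
    by (rule integral_mono[OF _ Kp_int[OF bp]]) (use R bp_space[OF bp] in auto)
  then show ?thesis by (simp add: prob_space)
qed

lemma Kp_lip: assumes bp: "borel_prob_on X M" shows "\<bar>Kp M z - Kp M z'\<bar> \<le> dist z z'"
proof -
  interpret prob_space M using bp unfolding borel_prob_on_def by auto
  have "\<bar>Kp M z - Kp M z'\<bar> = \<bar>\<integral>y. exp (- dist z y) - exp (- dist z' y) \<partial>M\<bar>"
    unfolding Kp_def using Kp_int[OF bp] by simp
  also have "\<dots> \<le> (\<integral>y. \<bar>exp (- dist z y) - exp (- dist z' y)\<bar> \<partial>M)"
    by (rule integral_abs_bound)
  also have "\<dots> \<le> (\<integral>y. dist z z' \<partial>M)"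
  proof (rule integral_mono)
    show "integrable M (\<lambda>y. \<bar>exp (- dist z y) - exp (- dist z' y)\<bar>)"
      using Kp_int[OF bp] by auto
    fix y
    have "\<bar>exp (- dist z y) - exp (- dist z' y)\<bar> \<le> \<bar>dist z y - dist z' y\<bar>"
      by (rule exp_lip) auto
    also have "\<dots> \<le> dist z z'" by (metis abs_dist_diff_le dist_commute)
    finally show "\<bar>exp (- dist z y) - exp (- dist z' y)\<bar> \<le> dist z z'" .
  qed simp
  finally show ?thesis by (simp add: prob_space)
qed

lemma Kp_cont: assumes bp: "borel_prob_on X M" shows "continuous_on A (Kp M)"
proof (rule continuous_on_iff[THEN iffD2], intro ballI allI impI)
  fix x e assume "x \<in> A" "(0::real) < e"
  have "dist (Kp M x') (Kp M x) < e" if "dist x' x < e" for x'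
    using Kp_lip[OF bp, of x' x] that unfolding dist_real_def by linarith
  then show "\<exists>d>0. \<forall>x'\<in>A. dist x' x < d \<longrightarrow> dist (Kp M x') (Kp M x) < e"
    using \<open>0 < e\<close> by blast
qed

lemma Kp_meas: assumes bp: "borel_prob_on X M" shows "Kp M \<in> borel_measurable (restrict_space borel X)"
  by (rule borel_measurable_continuous_on_restrict[OF Kp_cont[OF bp]])

lemma energy_Kp: "diversity_energy M = integral\<^sup>L M (Kp M)"
  unfolding diversity_energy_def Kp_def ..

lemma Kp_integrable: assumes bp: "borel_prob_on X M" shows "integrable M (Kp M)"
  by (rule bp_integrable[OF bp Kp_meas[OF bp], of 1]) (use Kp_bounds[OF bp] in auto)

lemma energy_bounds: assumes bp: "borel_prob_on X M"
  shows "0 \<le> diversity_energy M" "diversity_energy M \<le> 1"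
proof -
  interpret prob_space M using bp unfolding borel_prob_on_def by auto
  show "0 \<le> diversity_energy M" unfolding energy_Kp
    by (rule Bochner_Integration.integral_nonneg) (use Kp_bounds[OF bp] in auto)
  have "diversity_energy M \<le> (\<integral>y. 1 \<partial>M)" unfolding energy_Kp
    by (rule integral_mono[OF Kp_integrable[OF bp]]) (use Kp_bounds[OF bp] in auto)
  then show "diversity_energy M \<le> 1" by (simp add: prob_space)
qed



lemma lemA:
  assumes dm: "diversity_maximizing X M" and xX: "x \<in> X"
  shows "diversity_energy M \<le> Kp M x"
proof (rule ccontr)
  assume H: "\<not> diversity_energy M \<le> Kp M x"
  have bp: "borel_prob_on X M" using dm unfolding diversity_maximizing_def by auto
  interpret prob_space M using bp unfolding borel_prob_on_def by auto
  define E where "E = diversity_energy M"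
  define K where "K = Kp M x"
  have E01: "0 \<le> E" "E \<le> 1" using energy_bounds[OF bp] unfolding E_def by auto
  have K01: "0 \<le> K" "K \<le> 1" using Kp_bounds[OF bp] unfolding K_def by auto
  define e where "e = (E - K) / 2"
  have e0: "0 < e" "e \<le> 1" using H E01 K01 unfolding e_def E_def K_def by auto
  obtain N where bpN: "borel_prob_on X N" and mix: "\<And>g B. g \<in> borel_measurable (restrict_space borel X) \<Longrightarrow>
      (\<forall>z\<in>X. \<bar>g z\<bar> \<le> B) \<Longrightarrow> integral\<^sup>L N g = (1 - e) * integral\<^sup>L M g + e * (g x::real)"
    using mixture[OF bp xX, of e] e0 by auto
  define h where "h = (\<lambda>z. (1 - e) * Kp M z + e * exp (- dist z x))"
  have KN: "Kp N = h"
  proof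
    fix z show "Kp N z = h z" unfolding Kp_def h_def
      by (subst mix[OF exp_meas exp_bound]) simp
  qed
  have hm: "h \<in> borel_measurable (restrict_space borel X)" unfolding h_def
    using Kp_meas[OF bp] exp_meas[of x X] by (simp add: dist_commute)
  have hb: "\<forall>z\<in>X. \<bar>h z\<bar> \<le> 1"
  proof
    fix z assume "z \<in> X"
    have "0 \<le> Kp M z" "Kp M z \<le> 1" using Kp_bounds[OF bp] by auto
    moreover have "0 \<le> exp (- dist z x)" "exp (- dist z x) \<le> 1" by auto
    ultimately have a: "(1-e) * Kp M z \<le> (1-e) * 1" "e * exp (- dist z x) \<le> e * 1"
        "0 \<le> (1-e) * Kp M z" "0 \<le> e * exp (- dist z x)" using e0
      by (simp_all add: mult_left_le)
    then show "\<bar>h z\<bar> \<le> 1" unfolding h_def by (intro abs_leI) (smt (verit))+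
  qed
  have intM: "integral\<^sup>L M h = (1 - e) * E + e * K"
  proof -
    have "integral\<^sup>L M h = (1 - e) * integral\<^sup>L M (Kp M) + e * (\<integral>z. exp (- dist z x) \<partial>M)"
      unfolding h_def using Kp_integrable[OF bp] Kp_int[OF bp, of x] by (simp add: dist_commute)
    also have "(\<integral>z. exp (- dist z x) \<partial>M) = K" unfolding K_def Kp_def by (simp add: dist_commute)
    finally show ?thesis unfolding E_def energy_Kp .
  qed
  have "diversity_energy N = integral\<^sup>L N h" unfolding energy_Kp KN ..
  also have "\<dots> = (1 - e) * ((1 - e) * E + e * K) + e * ((1 - e) * K + e)"
    by (subst mix[OF hm hb]) (simp only: intM, simp add: h_def K_def)
  finally have EN: "diversity_energy N = (1 - e) * ((1 - e) * E + e * K) + e * ((1 - e) * K + e)" .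
  have "E \<le> diversity_energy N" using dm bpN unfolding diversity_maximizing_def E_def by auto
  then have "0 \<le> e * (2 * (K - E) + e * (E - 2 * K + 1))" unfolding EN by (simp add: algebra_simps power2_eq_square)
  then have "0 \<le> 2 * (K - E) + e * (E - 2 * K + 1)" using e0 by (simp add: zero_le_mult_iff)
  moreover have "e * (E - 2 * K + 1) \<le> e * 2" using e0 E01 K01 by (intro mult_left_mono) auto
  moreover have "2 * e = E - K" unfolding e_def by simp
  ultimately show False using e0 H unfolding E_def K_def by (smt (verit))
qed

lemma open_in_sets: assumes bp: "borel_prob_on X M" and "open U" shows "U \<inter> X \<in> sets M"
proof -
  have "U \<in> sets borel" using assms(2) by auto
  then have "U \<inter> X \<in> sets (restrict_space borel X)" unfolding sets_restrict_space by auto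
  then show ?thesis using bp unfolding borel_prob_on_def by auto
qed

lemma lemB:
  assumes dm: "diversity_maximizing X M" and xs: "x \<in> measure_support X M"
  shows "Kp M x \<le> diversity_energy M"
proof (rule ccontr)
  assume H: "\<not> Kp M x \<le> diversity_energy M"
  have bp: "borel_prob_on X M" using dm unfolding diversity_maximizing_def by auto
  interpret prob_space M using bp unfolding borel_prob_on_def by auto
  define E where "E = diversity_energy M"
  define d where "d = Kp M x - E"
  have d0: "0 < d" using H unfolding d_def E_def by auto
  define U where "U = ball x (d/2)"
  have xX: "x \<in> X" using xs unfolding measure_support_def by auto
  have pos: "measure M (U \<inter> X) > 0" using xs d0 unfolding measure_support_def U_def by auto
  have UX: "U \<inter> X \<in> sets M" using open_in_sets[OF bp] unfolding U_def by auto
  have II: "integrable M (indicat_real (U \<inter> X))"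
    using UX by (intro integrable_real_indicator) (auto simp: emeasure_eq_measure)
  have IE: "(\<integral>z. E + d/2 * indicator (U \<inter> X) z \<partial>M) = E + d/2 * measure M (U \<inter> X)"
    using II UX by (subst Bochner_Integration.integral_add) (auto simp: prob_space emeasure_eq_measure)
  have "(\<integral>z. E + d/2 * indicator (U \<inter> X) z \<partial>M) \<le> integral\<^sup>L M (Kp M)"
  proof (rule integral_mono[OF _ Kp_integrable[OF bp]])
    show "integrable M (\<lambda>z. E + d / 2 * indicator (U \<inter> X) z)"
      using II by (intro Bochner_Integration.integrable_add integrable_mult_right) auto
    fix z assume z: "z \<in> space M"
    then have zX: "z \<in> X" using bp_space[OF bp] by auto
    show "E + d / 2 * indicator (U \<inter> X) z \<le> Kp M z"
    proof (cases "z \<in> U")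
      case True
      then have "dist x z < d/2" unfolding U_def by auto
      then have "Kp M x - Kp M z < d/2" using Kp_lip[OF bp, of x z] by auto
      moreover have "indicator (U \<inter> X) z = (1::real)" using True zX by simp
      ultimately show ?thesis unfolding d_def by (simp add: field_simps)
    next
      case False
      then show ?thesis using lemA[OF dm zX] unfolding E_def by auto
    qed
  qed
  then have "E + d/2 * measure M (U \<inter> X) \<le> E" unfolding energy_Kp[symmetric] E_def IE[unfolded E_def] .
  then show False using mult_pos_pos[OF d0 pos] by linarith
qed



lemma seg_cont:
  assumes "\<forall>s\<in>{0..D}. \<forall>t\<in>{0..D}. dist (\<gamma> s) (\<gamma> t) = \<bar>s - t\<bar>"
  shows "continuous_on {0..D} \<gamma>"
proof (rule continuous_on_iff[THEN iffD2], intro ballI allI impI)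
  fix x e assume x: "x \<in> {0..D}" and "(0::real) < e"
  have "dist (\<gamma> x') (\<gamma> x) < e" if "x' \<in> {0..D}" "dist x' x < e" for x'
    using assms x that by (simp add: dist_real_def)
  then show "\<exists>d>0. \<forall>x'\<in>{0..D}. dist x' x < d \<longrightarrow> dist (\<gamma> x') (\<gamma> x) < e"
    using \<open>0 < e\<close> by blast
qed

lemma get_seg:
  assumes "uniquely_geodesic X" "x \<in> X" "y \<in> X"
  obtains \<gamma> where "\<gamma> ` {0..dist x y} \<subseteq> X" "\<gamma> 0 = x" "\<gamma> (dist x y) = y"
    "\<forall>s\<in>{0..dist x y}. \<forall>t\<in>{0..dist x y}. dist (\<gamma> s) (\<gamma> t) = \<bar>s - t\<bar>"
proof -
  obtain S where "is_segment X x y S" using assms unfolding uniquely_geodesic_def by blast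
  then show ?thesis using that unfolding is_segment_def by blast
qed

lemma comp_eq:
  assumes "C \<in> components U" "q \<in> C" shows "C = connected_component_set U q"
  using assms by (metis components_iff connected_component_eq)

lemma geo_add:
  assumes ug: "uniquely_geodesic X" and bX: "b \<in> X" and C: "C \<in> components (X - {b})"
    and qC: "q \<in> C" and yX: "y \<in> X" and yC: "y \<notin> C"
  shows "dist q y = dist q b + dist b y"
proof -
  have qX: "q \<in> X" using in_components_subset[OF C] qC by auto
  obtain \<gamma> where g: "\<gamma> ` {0..dist q y} \<subseteq> X" "\<gamma> 0 = q" "\<gamma> (dist q y) = y"
    "\<forall>s\<in>{0..dist q y}. \<forall>t\<in>{0..dist q y}. dist (\<gamma> s) (\<gamma> t) = \<bar>s - t\<bar>"
    using get_seg[OF ug qX yX] by blast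
  have "b \<in> \<gamma> ` {0..dist q y}"
  proof (rule ccontr)
    assume nb: "b \<notin> \<gamma> ` {0..dist q y}"
    have conn: "connected (\<gamma> ` {0..dist q y})"
      by (rule connected_continuous_image[OF seg_cont[OF g(4)]]) simp
    have "\<gamma> ` {0..dist q y} \<subseteq> connected_component_set (X - {b}) q"
      by (rule connected_component_maximal) (use g nb conn in \<open>force+\<close>)
    moreover have "y \<in> \<gamma> ` {0..dist q y}" using g(3)[symmetric] by (intro image_eqI) auto
    ultimately show False using yC comp_eq[OF C qC] by auto
  qed
  then obtain s where s: "s \<in> {0..dist q y}" "b = \<gamma> s" by auto
  have "dist (\<gamma> 0) (\<gamma> s) = \<bar>0 - s\<bar>" using g(4) s by auto
  then have "dist q b = s" using g(2) s by simp
  moreover have "dist (\<gamma> s) (\<gamma> (dist q y)) = \<bar>s - dist q y\<bar>" using g(4) s by auto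
  then have "dist b y = dist q y - s" using g(3) s by simp
  ultimately show ?thesis by simp
qed

lemma point_at:
  assumes ug: "uniquely_geodesic X" and bX: "b \<in> X" and C: "C \<in> components (X - {b})"
    and pC: "p \<in> C" and t0: "0 < t" and tp: "t \<le> dist b p"
  shows "\<exists>q\<in>C. dist b q = t"
proof -
  have pX: "p \<in> X" using in_components_subset[OF C] pC by auto
  obtain \<gamma> where g: "\<gamma> ` {0..dist b p} \<subseteq> X" "\<gamma> 0 = b" "\<gamma> (dist b p) = p"
    "\<forall>s\<in>{0..dist b p}. \<forall>t\<in>{0..dist b p}. dist (\<gamma> s) (\<gamma> t) = \<bar>s - t\<bar>"
    using get_seg[OF ug bX pX] by blast
  have dq: "dist b (\<gamma> t) = t" using g(2,4) t0 tp by force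
  have conn: "connected (\<gamma> ` {t..dist b p})"
    by (rule connected_continuous_image[OF continuous_on_subset[OF seg_cont[OF g(4)]]]) (use t0 in auto)
  have sub: "\<gamma> ` {t..dist b p} \<subseteq> X - {b}"
  proof
    fix z assume "z \<in> \<gamma> ` {t..dist b p}"
    then obtain s where s: "s \<in> {t..dist b p}" "z = \<gamma> s" by auto
    then have "dist (\<gamma> 0) (\<gamma> s) = s" using g(4) t0 by force
    then have "z \<noteq> b" using s t0 g(2) by auto
    moreover have "z \<in> X" using g(1) s t0 by auto
    ultimately show "z \<in> X - {b}" by auto
  qed
  have "\<gamma> ` {t..dist b p} \<subseteq> connected_component_set (X - {b}) p"
    by (rule connected_component_maximal[OF _ conn sub]) (use g(3)[symmetric] tp in auto)
  moreover have "\<gamma> t \<in> \<gamma> ` {t..dist b p}" using tp by auto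
  ultimately have "\<gamma> t \<in> C" using comp_eq[OF C pC] by blast
  then show ?thesis using dq by blast
qed

lemma three_comps:
  assumes "infinite A \<or> card A \<ge> 3"
  shows "\<exists>a b c. a \<in> A \<and> b \<in> A \<and> c \<in> A \<and> a \<noteq> b \<and> b \<noteq> c \<and> a \<noteq> c"
proof -
  obtain B where B: "B \<subseteq> A" "card B = 3"
  proof (cases "finite A")
    case True
    then have "3 \<le> card A" using assms by auto
    then show ?thesis using obtain_subset_with_card_n[of 3 A] that by metis
  next
    case False
    then show ?thesis using infinite_arbitrarily_large[of A 3] that by metis
  qed
  then obtain a b c where "B = {a,b,c}" "a \<noteq> b" "b \<noteq> c" "a \<noteq> c" unfolding card_3_iff by metis
  then show ?thesis using B(1) by auto
qed

lemma exp_half: "exp (1/2::real) < 2"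
proof (rule ccontr)
  assume "\<not> exp (1/2::real) < 2"
  then have "2 * 2 \<le> exp (1/2::real) * exp (1/2)" by (intro mult_mono) auto
  also have "\<dots> = exp 1" by (simp flip: exp_add)
  finally show False using exp_le by simp
qed

lemma f_lt3: assumes "0 < t" "t \<le> 1/2" shows "exp t + 2 * exp (- t) < (3::real)"
proof -
  define u where "u = exp t"
  have u1: "1 < u" unfolding u_def using assms by simp
  have u2: "u < 2" unfolding u_def using exp_half assms
    by (meson exp_le_cancel_iff le_less_trans)
  have "(u - 1) * (u - 2) < 0" using u1 u2 by (simp add: mult_pos_neg)
  then have "u * u + 2 < 3 * u" by (simp add: algebra_simps)
  then have "u + 2 / u < 3" using u1 by (simp add: field_simps)
  then show ?thesis unfolding u_def by (simp add: exp_minus field_simps)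
qed


lemma pointwise3:
  fixes a1 a2 a3 u v :: real
  assumes "a1 \<le> u" "a2 \<le> u" "a3 \<le> u" "v \<le> u"
    and "(\<not> Pa \<longrightarrow> a1 = v)" "(\<not> Pb \<longrightarrow> a2 = v)" "(\<not> Pc \<longrightarrow> a3 = v)"
    and "\<not> (Pa \<and> Pb)" "\<not> (Pb \<and> Pc)" "\<not> (Pa \<and> Pc)"
  shows "a1 + a2 + a3 \<le> u + v + v"
  using assms by (cases Pa; cases Pb; cases Pc) auto

theorem theorem5p1:
  fixes X :: "'a::metric_space set" and M :: "'a measure"
  assumes "compact X" and "R_tree X" and "diversity_maximizing X M"
  shows "\<forall>x\<in>X. branch_point X x \<longrightarrow> x \<notin> measure_support X M"
proof (intro ballI impI notI)
  fix b assume bX: "b \<in> X" and br: "branch_point X b" and bs: "b \<in> measure_support X M"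
  have dm: "diversity_maximizing X M" by fact
  have bp: "borel_prob_on X M" using dm unfolding diversity_maximizing_def by auto
  interpret prob_space M using bp unfolding borel_prob_on_def by auto
  have ug: "uniquely_geodesic X" using assms(2) unfolding R_tree_def by auto
  obtain C1 C2 C3 where C: "C1 \<in> components (X - {b})" "C2 \<in> components (X - {b})"
    "C3 \<in> components (X - {b})" and Cd: "C1 \<noteq> C2" "C2 \<noteq> C3" "C1 \<noteq> C3"
    using three_comps[of "components (X - {b})"] br unfolding branch_point_def by blast
  have Cdisj: "C1 \<inter> C2 = {}" "C2 \<inter> C3 = {}" "C1 \<inter> C3 = {}"
    using components_nonoverlap[OF C(1) C(2)] components_nonoverlap[OF C(2) C(3)]
      components_nonoverlap[OF C(1) C(3)] Cd by simp_all
  obtain p1 where p1: "p1 \<in> C1" using in_components_nonempty[OF C(1)] by blast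
  obtain p2 where p2: "p2 \<in> C2" using in_components_nonempty[OF C(2)] by blast
  obtain p3 where p3: "p3 \<in> C3" using in_components_nonempty[OF C(3)] by blast
  note p = p1 p2 p3
  have pb: "p1 \<noteq> b" "p2 \<noteq> b" "p3 \<noteq> b"
    using p1 in_components_subset[OF C(1)] p2 in_components_subset[OF C(2)]
      p3 in_components_subset[OF C(3)] by auto
  define t where "t = min (1/2) (min (dist b p1) (min (dist b p2) (dist b p3)))"
  have t0: "0 < t" unfolding t_def using pb by auto
  have tle: "t \<le> 1/2" "t \<le> dist b p1" "t \<le> dist b p2" "t \<le> dist b p3" unfolding t_def by auto
  obtain q1 where q1: "q1 \<in> C1" "dist b q1 = t" using point_at[OF ug bX C(1) p(1) t0 tle(2)] by blast
  obtain q2 where q2: "q2 \<in> C2" "dist b q2 = t" using point_at[OF ug bX C(2) p(2) t0 tle(3)] by blast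
  obtain q3 where q3: "q3 \<in> C3" "dist b q3 = t" using point_at[OF ug bX C(3) p(3) t0 tle(4)] by blast
  have qX: "q1 \<in> X" "q2 \<in> X" "q3 \<in> X"
    using q1(1) in_components_subset[OF C(1)] q2(1) in_components_subset[OF C(2)]
      q3(1) in_components_subset[OF C(3)] by auto
  have up: "exp (- dist q y) \<le> exp t * exp (- dist b y)" if "dist b q = t" for q y
  proof -
    have "dist b y \<le> dist b q + dist q y" by (rule dist_triangle)
    then have "- dist q y \<le> t + - dist b y" using that by simp
    then have "exp (- dist q y) \<le> exp (t + - dist b y)" by (simp only: exp_le_cancel_iff)
    then show ?thesis by (simp only: exp_add)
  qed
  have eqo: "exp (- dist q y) = exp (- t) * exp (- dist b y)"
    if "C \<in> components (X - {b})" "q \<in> C" "dist b q = t" "y \<in> X" "y \<notin> C" for C q y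
  proof -
    have "dist q y = dist q b + dist b y" by (rule geo_add[OF ug bX that(1,2,4,5)])
    then have "- dist q y = - t + - dist b y" using that(3) by (simp add: dist_commute)
    then show ?thesis by (simp only: exp_add)
  qed
  have vu: "exp (- t) * exp (- dist b y) \<le> exp t * exp (- dist b y)" for y
    using t0 by (intro mult_right_mono) auto
  have pw: "exp (- dist q1 y) + exp (- dist q2 y) + exp (- dist q3 y)
      \<le> exp t * exp (- dist b y) + exp (- t) * exp (- dist b y) + exp (- t) * exp (- dist b y)"
    if "y \<in> X" for y
    apply (rule pointwise3[where Pa="y \<in> C1" and Pb="y \<in> C2" and Pc="y \<in> C3"])
    using up[OF q1(2)] up[OF q2(2)] up[OF q3(2)] vu
      eqo[OF C(1) q1 that] eqo[OF C(2) q2 that] eqo[OF C(3) q3 that] Cdisj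
    by blast+
  have sp: "space M = X" by (rule bp_space[OF bp])
  have "Kp M q1 + Kp M q2 + Kp M q3 =
      (\<integral>y. exp (- dist q1 y) + exp (- dist q2 y) + exp (- dist q3 y) \<partial>M)"
    unfolding Kp_def using Kp_int[OF bp] by simp
  also have "\<dots> \<le> (\<integral>y. exp t * exp (- dist b y) + exp (- t) * exp (- dist b y) + exp (- t) * exp (- dist b y) \<partial>M)"
    by (rule integral_mono) (use Kp_int[OF bp] pw sp in auto)
  also have "\<dots> = exp t * Kp M b + exp (- t) * Kp M b + exp (- t) * Kp M b"
    unfolding Kp_def using Kp_int[OF bp] by simp
  finally have S: "Kp M q1 + Kp M q2 + Kp M q3 \<le> exp t * Kp M b + exp (- t) * Kp M b + exp (- t) * Kp M b" .
  define E where "E = diversity_energy M"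
  have A: "E \<le> Kp M q1" "E \<le> Kp M q2" "E \<le> Kp M q3" unfolding E_def using lemA[OF dm] qX by auto
  have B: "Kp M b \<le> E" unfolding E_def by (rule lemB[OF dm bs])
  obtain R where R: "\<forall>y\<in>X. dist b y \<le> R" using compact_imp_bounded[OF assms(1)] bounded_any_center by blast
  have Kpos: "0 < Kp M b" using Kp_lower[OF bp R] by (meson exp_gt_zero less_le_trans)
  define f where "f = exp t + 2 * exp (- t)"
  have f3: "f < 3" unfolding f_def by (rule f_lt3[OF t0 tle(1)])
  have S': "3 * E \<le> f * Kp M b" using S A unfolding f_def by (simp add: algebra_simps)
  have "f * Kp M b \<le> f * E" using B unfolding f_def by (intro mult_left_mono) auto
  moreover have "0 < (3 - f) * E" using f3 Kpos B by (intro mult_pos_pos) auto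
  ultimately show False using S' by (simp add: algebra_simps)
qed

end
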